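(* Let $d\in\mathbb{N}$, let $X$ be a finite subset of $\mathbb{R}^{2^d}\setminus\{0\}$ (a point cloud), and let $d_X$ be the Euclidean metric restricted to $X$. Let $\rho:\mathbb{R}^{2^d}\setminus\{0\}\to\mathcal{S}(\mathbb{C}^{2^d})$ be the amplitude encoding $\rho(x)=\frac{1}{\lVert x\rVert^2}\sum_{i,j=0}^{2^d-1}x_i\overline{x_j}\,|i\rangle\langle j|$, where $\mathcal{S}(\mathbb{C}^{2^d})$ is equipped with the Bures fidelity metric $d_F$, and let $\rho|_X$ be its restriction to $X$. Let $Y=\rho(X)$ with $d_Y$ the restriction of $d_F$ to $Y$. Then: (i) $0\le \mathrm{dis}(\rho|_X)\le \max\{\mathrm{diam}(X,d_X),\mathrm{diam}(Y,d_Y)\}$. Moreover, there exists a point cloud $X$ with $\mathrm{dis}(\rho|_X)=0$; there exists a point cloud $X$ with $\mathrm{dis}(\rho|_X)=\mathrm{diam}(X,d_X)$; and there is a fixed $N\in\mathbb{N}$ such that for every $\epsilon$ with $0<\epsilon<1$ there exists a point cloud $X$ with $\#X=N$ and $\mathrm{dis}(\rho|_X)=\mathrm{diam}(Y,d_Y)-\epsilon$. (ii) $0\le \mathrm{sfdis}(\rho|_X)\le \max\{\mathrm{diam}(X,d_X),\mathrm{diam}(Y,d_Y)\}$. Moreover, there exists a point cloud $X$ with $\mathrm{sfdis}(\rho|_X)=0$ and there exists a point cloud $X$ with $\mathrm{sfdis}(\rho|_X)=\mathrm{diam}(X,d_X)$. (iii) There exists a sequence of finite subsets $X_n\subset\mathbb{R}^{2^d}\setminus\{0\}$,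 each equipped with the Euclidean metric $d_{X_n}$, such that $\#X_n$ is independent of $n$ and $\lim_{n\to\infty}\mathrm{sfdis}(\rho|_{X_n})=\infty$.
   Context: $\mathcal{S}(\mathcal{H})$ denotes the set of density matrices (positive semidefinite, trace one) on a Hilbert space $\mathcal{H}$; $|0\rangle,\dots,|2^d-1\rangle$ is the standard basis of $\mathbb{C}^{2^d}$. The fidelity of $\rho,\sigma\in\mathcal{S}(\mathcal{H})$ is $F(\rho,\sigma)=\big(\mathrm{Tr}\sqrt{\sqrt{\rho}\,\sigma\sqrt{\rho}}\big)^2$ and the Bures fidelity metric is $d_F(\rho,\sigma)=\sqrt{1-\sqrt{F(\rho,\sigma)}}$ (maximum value $1$). For a metric space $(Z,d_Z)$, $\mathrm{diam}(Z,d_Z)=\sup_{z,z'\in Z}d_Z(z,z')$. For metric spaces $(A,d_A)$, $(B,d_B)$ and any function $f:A\to B$, the distortion is $\mathrm{dis}(f)=\sup_{a,a'\in A}|d_A(a,a')-d_B(f(a),f(a'))|$, and the scale-free distortion is $\mathrm{sfdis}(f)=\inf_{\lambda>0}\sup_{a,a'\in A}\big|d_A(a,a')-\tfrac{1}{\lambda}d_B(f(a),f(a'))\big|$. Here $\rho|_X$ is regarded as a map from $(X,d_X)$ to $(\mathcal{S}(\mathbb{C}^{2^d}),d_F)$ (equivalently to $(Y,d_Y)$). *)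

theory Defs
  imports "HOL-Analysis.Analysis" "Jordan_Normal_Form.Matrix"
begin

definition eucl_norm :: "real vec \<Rightarrow> real" where
  "eucl_norm x = sqrt (\<Sum>i<dim_vec x. (x $ i)^2)"

definition eucl_dist :: "real vec \<Rightarrow> real vec \<Rightarrow> real" where
  "eucl_dist x y = sqrt (\<Sum>i<dim_vec x. (x $ i - y $ i)^2)"

definition punctured :: "nat \<Rightarrow> real vec set" where
  "punctured d = {x. dim_vec x = 2^d \<and> x \<noteq> 0\<^sub>v (2^d)}"

definition point_cloud :: "nat \<Rightarrow> real vec set \<Rightarrow> bool" where
  "point_cloud d X \<longleftrightarrow> finite X \<and> X \<subseteq> punctured d"

definition hermitian_mat :: "complex mat \<Rightarrow> bool" where
  "hermitian_mat A \<longleftrightarrow> dim_row A = dim_col A \<and>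
     (\<forall>i<dim_row A. \<forall>j<dim_row A. A $$ (i,j) = cnj (A $$ (j,i)))"

definition psd_mat :: "complex mat \<Rightarrow> bool" where
  "psd_mat A \<longleftrightarrow> hermitian_mat A \<and>
     (\<forall>v \<in> carrier_vec (dim_row A).
        Im ((A *\<^sub>v v) \<bullet>c v) = 0 \<and> Re ((A *\<^sub>v v) \<bullet>c v) \<ge> 0)"

definition mtrace :: "complex mat \<Rightarrow> complex" where
  "mtrace A = (\<Sum>i<dim_row A. A $$ (i,i))"

definition density_mats :: "nat \<Rightarrow> complex mat set" where
  "density_mats n = {A. A \<in> carrier_mat n n \<and> psd_mat A \<and> mtrace A = 1}"

text \<open>The (unique) positive semidefinite square root.\<close>
definition mat_sqrt :: "complex mat \<Rightarrow> complex mat" where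
  "mat_sqrt A = (THE S. S \<in> carrier_mat (dim_row A) (dim_row A) \<and> psd_mat S \<and> S * S = A)"

definition fidelity :: "complex mat \<Rightarrow> complex mat \<Rightarrow> real" where
  "fidelity \<rho> \<sigma> = (Re (mtrace (mat_sqrt (mat_sqrt \<rho> * \<sigma> * mat_sqrt \<rho>))))^2"

definition bures_dist :: "complex mat \<Rightarrow> complex mat \<Rightarrow> real" where
  "bures_dist \<rho> \<sigma> = sqrt (1 - sqrt (fidelity \<rho> \<sigma>))"

definition amp_enc :: "real vec \<Rightarrow> complex mat" where
  "amp_enc x = mat (dim_vec x) (dim_vec x)
     (\<lambda>(i,j). complex_of_real (x $ i) * cnj (complex_of_real (x $ j)) / complex_of_real ((eucl_norm x)^2))"

text \<open>Suprema over finite sets of nonnegative reals; \<open>insert 0\<close> only fixes the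
  value 0 for the empty set (all quantities are nonnegative).\<close>
definition diam_fin :: "'a set \<Rightarrow> ('a \<Rightarrow> 'a \<Rightarrow> real) \<Rightarrow> real" where
  "diam_fin Z dZ = Max (insert 0 {dZ z z' | z z'. z \<in> Z \<and> z' \<in> Z})"

definition distortion :: "'a set \<Rightarrow> ('a \<Rightarrow> 'a \<Rightarrow> real) \<Rightarrow> ('b \<Rightarrow> 'b \<Rightarrow> real) \<Rightarrow> ('a \<Rightarrow> 'b) \<Rightarrow> real" where
  "distortion A dA dB f = Max (insert 0 {\<bar>dA a a' - dB (f a) (f a')\<bar> | a a'. a \<in> A \<and> a' \<in> A})"

definition sf_distortion :: "'a set \<Rightarrow> ('a \<Rightarrow> 'a \<Rightarrow> real) \<Rightarrow> ('b \<Rightarrow> 'b \<Rightarrow> real) \<Rightarrow> ('a \<Rightarrow> 'b) \<Rightarrow> real" where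
  "sf_distortion A dA dB f = (INF l\<in>{0<..}.
     Max (insert 0 {\<bar>dA a a' - dB (f a) (f a') / l\<bar> | a a'. a \<in> A \<and> a' \<in> A}))"

end

theory Submission
  imports Defs
begin
no_notation vec_nth (infixl "$" 90)
lemma sprod_sum: "v \<in> carrier_vec n \<Longrightarrow> w \<in> carrier_vec n \<Longrightarrow> v \<bullet>c w = (\<Sum>i<n. v$i * cnj (w$i))"
  by (simp add: scalar_prod_def lessThan_atLeast0)
lemma mv_sum: "S \<in> carrier_mat n m \<Longrightarrow> v \<in> carrier_vec m \<Longrightarrow> i < n \<Longrightarrow> (S *\<^sub>v v) $ i = (\<Sum>j<m. S$$(i,j) * v$j)"
  by (simp add: scalar_prod_def lessThan_atLeast0)
lemma mm_sum: "A \<in> carrier_mat n m \<Longrightarrow> B \<in> carrier_mat m k \<Longrightarrow> i < n \<Longrightarrow> j < k \<Longrightarrow> (A * B) $$ (i,j) = (\<Sum>l<m. A$$(i,l) * B$$(l,j))"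
  by (simp add: scalar_prod_def lessThan_atLeast0)

lemma herm_adj:
  assumes S: "S \<in> carrier_mat n n" and h: "hermitian_mat S" and v: "v \<in> carrier_vec n" and w: "w \<in> carrier_vec n"
  shows "(S *\<^sub>v v) \<bullet>c w = v \<bullet>c (S *\<^sub>v w)"
proof -
  have "(S *\<^sub>v v) \<bullet>c w = (\<Sum>i<n. (\<Sum>j<n. S$$(i,j) * v$j) * cnj (w$i))"
    using S v w by (subst sprod_sum[of _ n], auto intro!: sum.cong simp: scalar_prod_def lessThan_atLeast0)
  also have "\<dots> = (\<Sum>i<n. \<Sum>j<n. S$$(i,j) * v$j * cnj (w$i))" by (simp add: sum_distrib_right)
  also have "\<dots> = (\<Sum>j<n. \<Sum>i<n. S$$(i,j) * v$j * cnj (w$i))" by (rule sum.swap)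
  also have "\<dots> = (\<Sum>j<n. v$j * cnj (\<Sum>i<n. S$$(j,i) * w$i))"
  proof (rule sum.cong[OF refl])
    fix j assume j: "j \<in> {..<n}"
    have hA: "\<forall>i<n. \<forall>j<n. S$$(i,j) = cnj (S$$(j,i))" using h S unfolding hermitian_mat_def by (simp only: carrier_matD, blast)
    have hh: "\<And>i. i < n \<Longrightarrow> cnj (S$$(j,i)) = S$$(i,j)" using hA j by (metis lessThan_iff)
    have "(\<Sum>i<n. S$$(i,j) * v$j * cnj (w$i)) = (\<Sum>i<n. v$j * (cnj (S$$(j,i)) * cnj (w$i)))"
    proof (rule sum.cong[OF refl])
      fix i assume "i \<in> {..<n}"
      then have "S$$(i,j) = cnj (S$$(j,i))" using hh by simp
      then show "S$$(i,j) * v$j * cnj (w$i) = v$j * (cnj (S$$(j,i)) * cnj (w$i))" by simp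
    qed
    also have "\<dots> = v$j * cnj (\<Sum>i<n. S$$(j,i) * w$i)"
      by (simp add: sum_distrib_left)
    finally show "(\<Sum>i<n. S$$(i,j) * v$j * cnj (w$i)) = v$j * cnj (\<Sum>i<n. S$$(j,i) * w$i)" .
  qed
  also have "\<dots> = v \<bullet>c (S *\<^sub>v w)" using S v w by (subst sprod_sum[of _ n], auto intro!: sum.cong simp: scalar_prod_def lessThan_atLeast0)
  finally show ?thesis .
qed

lemma mat_eq_by_vec:
  fixes A B :: "complex mat"
  assumes A: "A \<in> carrier_mat n m" and B: "B \<in> carrier_mat n m"
    and h: "\<And>v. v \<in> carrier_vec m \<Longrightarrow> A *\<^sub>v v = B *\<^sub>v v"
  shows "A = B"
proof (rule eq_matI)
  fix i j assume i: "i < dim_row B" and j: "j < dim_col B"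
  have "A *\<^sub>v unit_vec m j = B *\<^sub>v unit_vec m j" using h by simp
  then have "(A *\<^sub>v unit_vec m j) $ i = (B *\<^sub>v unit_vec m j) $ i" by simp
  then show "A $$ (i, j) = B $$ (i, j)" using A B i j by simp
qed (use A B in auto)

definition sproj :: "real \<Rightarrow> complex vec \<Rightarrow> complex mat" where
  "sproj r u = mat (dim_vec u) (dim_vec u) (\<lambda>(i,j). complex_of_real r * (u$i * cnj (u$j)))"

lemma sproj_carrier: "u \<in> carrier_vec n \<Longrightarrow> sproj r u \<in> carrier_mat n n"
  by (simp add: sproj_def)

lemma sproj_index: "i < dim_vec u \<Longrightarrow> j < dim_vec u \<Longrightarrow> sproj r u $$ (i,j) = complex_of_real r * (u$i * cnj (u$j))"
  by (simp add: sproj_def)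

lemma cnj_sprod: "v \<in> carrier_vec n \<Longrightarrow> w \<in> carrier_vec n \<Longrightarrow> cnj (v \<bullet>c w) = w \<bullet>c v"
  by (simp add: sprod_sum cnj_sum mult.commute)

lemma sproj_mv: assumes u: "u \<in> carrier_vec n" and v: "v \<in> carrier_vec n"
  shows "sproj r u *\<^sub>v v = (complex_of_real r * (v \<bullet>c u)) \<cdot>\<^sub>v u"
proof (rule eq_vecI)
  fix i assume "i < dim_vec ((complex_of_real r * (v \<bullet>c u)) \<cdot>\<^sub>v u)"
  then have i: "i < n" using u by simp
  have "(sproj r u *\<^sub>v v) $ i = (\<Sum>j<n. complex_of_real r * (u$i * cnj (u$j)) * v$j)"
    using u v i by (simp add: sproj_def scalar_prod_def lessThan_atLeast0)
  also have "\<dots> = (complex_of_real r * (v \<bullet>c u)) * u$i"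
    using u v by (simp add: sprod_sum sum_distrib_left sum_distrib_right mult_ac)
  finally show "(sproj r u *\<^sub>v v) $ i = ((complex_of_real r * (v \<bullet>c u)) \<cdot>\<^sub>v u) $ i"
    using i u by simp
qed (use u v in \<open>simp add: sproj_def\<close>)

lemma sproj_quad: assumes u: "u \<in> carrier_vec n" and v: "v \<in> carrier_vec n"
  shows "(sproj r u *\<^sub>v v) \<bullet>c v = complex_of_real (r * (cmod (v \<bullet>c u))^2)"
proof -
  have "(sproj r u *\<^sub>v v) \<bullet>c v = (complex_of_real r * (v \<bullet>c u)) * (u \<bullet>c v)"
    using u v by (simp add: sproj_mv sprod_sum sum_distrib_left mult_ac) (rule sum.swap)
  also have "\<dots> = complex_of_real r * ((v \<bullet>c u) * cnj (v \<bullet>c u))"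
    using u v by (simp add: cnj_sprod)
  also have "\<dots> = complex_of_real (r * (cmod (v \<bullet>c u))^2)"
    by (simp add: complex_norm_square[symmetric])
  finally show ?thesis .
qed

lemma sproj_psd: assumes u: "u \<in> carrier_vec n" and r: "r \<ge> 0"
  shows "psd_mat (sproj r u)"
proof -
  have "hermitian_mat (sproj r u)"
    unfolding hermitian_mat_def by (simp add: sproj_def mult_ac)
  moreover have "\<forall>v \<in> carrier_vec n. Im ((sproj r u *\<^sub>v v) \<bullet>c v) = 0 \<and> Re ((sproj r u *\<^sub>v v) \<bullet>c v) \<ge> 0"
  proof
    fix v :: "complex vec" assume v: "v \<in> carrier_vec n"
    show "Im ((sproj r u *\<^sub>v v) \<bullet>c v) = 0 \<and> Re ((sproj r u *\<^sub>v v) \<bullet>c v) \<ge> 0"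
      unfolding sproj_quad[OF u v] using r by simp
  qed
  moreover have "dim_row (sproj r u) = n" using u by (simp add: sproj_def)
  ultimately show ?thesis unfolding psd_mat_def by simp
qed


lemma sproj_mult: assumes u: "u \<in> carrier_vec n" and uu: "u \<bullet>c u = 1"
  shows "sproj r u * sproj s u = sproj (r * s) u"
proof (rule eq_matI)
  fix i j assume "i < dim_row (sproj (r * s) u)" "j < dim_col (sproj (r * s) u)"
  then have i: "i < n" and j: "j < n" using u by (auto simp: sproj_def)
  have "(sproj r u * sproj s u) $$ (i,j) = (\<Sum>l<n. complex_of_real r * (u$i * cnj (u$l)) * (complex_of_real s * (u$l * cnj (u$j))))"
    apply (subst mm_sum[OF sproj_carrier[OF u] sproj_carrier[OF u] i j])
    using u i j by (simp add: sproj_index)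
  also have "\<dots> = complex_of_real r * complex_of_real s * (u$i * cnj (u$j)) * (u \<bullet>c u)"
    using u by (simp add: sprod_sum sum_distrib_left mult_ac)
  also have "\<dots> = sproj (r * s) u $$ (i,j)" using uu u i j by (simp add: sproj_index)
  finally show "(sproj r u * sproj s u) $$ (i,j) = sproj (r * s) u $$ (i,j)" .
qed (use u in \<open>auto simp: sproj_def\<close>)

lemma sproj_sandwich: assumes u: "u \<in> carrier_vec n" and w: "w \<in> carrier_vec n"
  shows "sproj 1 u * sproj 1 w * sproj 1 u = sproj ((cmod (w \<bullet>c u))^2) u"
proof -
  define M where "M = mat n n (\<lambda>(i,j). (w \<bullet>c u) * (u$i * cnj (w$j)))"
  have M: "M \<in> carrier_mat n n" by (simp add: M_def)
  have 1: "sproj 1 u * sproj 1 w = M"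
  proof (rule eq_matI)
    fix i j assume "i < dim_row M" "j < dim_col M"
    then have i: "i < n" and j: "j < n" by (auto simp: M_def)
    have "(sproj 1 u * sproj 1 w) $$ (i,j) = (\<Sum>l<n. (u$i * cnj (u$l)) * (w$l * cnj (w$j)))"
      apply (subst mm_sum[OF sproj_carrier[OF u] sproj_carrier[OF w] i j])
      using u w i j by (simp add: sproj_index)
    also have "\<dots> = (w \<bullet>c u) * (u$i * cnj (w$j))"
      using u w by (simp add: sprod_sum sum_distrib_left sum_distrib_right mult_ac)
    finally show "(sproj 1 u * sproj 1 w) $$ (i,j) = M $$ (i,j)" using i j by (simp add: M_def)
  qed (use u w in \<open>auto simp: sproj_def M_def\<close>)
  have 2: "M * sproj 1 u = sproj ((cmod (w \<bullet>c u))^2) u"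
  proof (rule eq_matI)
    fix i j assume "i < dim_row (sproj ((cmod (w \<bullet>c u))^2) u)" "j < dim_col (sproj ((cmod (w \<bullet>c u))^2) u)"
    then have i: "i < n" and j: "j < n" using u by (auto simp: sproj_def)
    have "(M * sproj 1 u) $$ (i,j) = (\<Sum>l<n. ((w \<bullet>c u) * (u$i * cnj (w$l))) * (u$l * cnj (u$j)))"
      apply (subst mm_sum[OF M sproj_carrier[OF u] i j])
      using u w i j by (simp add: sproj_index M_def)
    also have "\<dots> = ((w \<bullet>c u) * (u \<bullet>c w)) * (u$i * cnj (u$j))"
      using u w by (simp add: sprod_sum sum_distrib_left sum_distrib_right mult_ac) (rule sum.swap)
    also have "(w \<bullet>c u) * (u \<bullet>c w) = complex_of_real ((cmod (w \<bullet>c u))^2)"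
      using u w complex_norm_square[of "w \<bullet>c u"] by (simp add: cnj_sprod[of w n u, symmetric])
    finally show "(M * sproj 1 u) $$ (i,j) = sproj ((cmod (w \<bullet>c u))^2) u $$ (i,j)"
      using i j u by (simp add: sproj_index)
  qed (use u M in \<open>auto simp: sproj_def\<close>)
  show ?thesis using 1 2 by simp
qed

lemma mtrace_sproj: "mtrace (sproj r u) = complex_of_real r * (u \<bullet>c u)"
  by (simp add: mtrace_def sproj_def sprod_sum[of u "dim_vec u"] sum_distrib_left)


lemma smult_sprod: "u \<in> carrier_vec n \<Longrightarrow> w \<in> carrier_vec n \<Longrightarrow> (a \<cdot>\<^sub>v u) \<bullet>c w = a * (u \<bullet>c w)"
  by (simp add: sprod_sum[of _ n] sum_distrib_left mult.assoc)

lemma sprod_smult: "u \<in> carrier_vec n \<Longrightarrow> w \<in> carrier_vec n \<Longrightarrow> u \<bullet>c (a \<cdot>\<^sub>v w) = cnj a * (u \<bullet>c w)"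
  by (simp add: sprod_sum[of _ n] sum_distrib_left mult_ac)

lemma minus_sprod: fixes u v :: "complex vec" shows "u \<in> carrier_vec n \<Longrightarrow> v \<in> carrier_vec n \<Longrightarrow> (v - a \<cdot>\<^sub>v u) \<bullet>c u = v \<bullet>c u - a * (u \<bullet>c u)"
proof -
  assume u: "u \<in> carrier_vec n" and v: "v \<in> carrier_vec n"
  have "v - a \<cdot>\<^sub>v u \<in> carrier_vec n" using u v by simp
  then have "(v - a \<cdot>\<^sub>v u) \<bullet>c u = (\<Sum>i<n. (v$i - a * u$i) * cnj (u$i))"
    using u v by (subst sprod_sum[of _ n], auto intro!: sum.cong)
  also have "\<dots> = v \<bullet>c u - a * (u \<bullet>c u)"
    using u v by (simp add: sprod_sum[of _ n] sum_distrib_left sum_subtractf algebra_simps)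
  finally show ?thesis .
qed

lemma sqrt_unique:
  assumes u: "u \<in> carrier_vec n" and uu: "u \<bullet>c u = 1" and S: "S \<in> carrier_mat n n"
    and p: "psd_mat S" and SS: "S * S = sproj c u" and c: "c \<ge> 0"
  shows "S = sproj (sqrt c) u"
proof -
  have h: "hermitian_mat S" using p unfolding psd_mat_def by blast
  have pq: "\<And>v. v \<in> carrier_vec n \<Longrightarrow> Im ((S *\<^sub>v v) \<bullet>c v) = 0 \<and> Re ((S *\<^sub>v v) \<bullet>c v) \<ge> 0"
  proof -
    have d: "dim_row S = n" using S by simp
    fix v :: "complex vec" assume "v \<in> carrier_vec n"
    then show "Im ((S *\<^sub>v v) \<bullet>c v) = 0 \<and> Re ((S *\<^sub>v v) \<bullet>c v) \<ge> 0"
      using p unfolding psd_mat_def d by blast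
  qed
  have SSv: "S *\<^sub>v (S *\<^sub>v v) = (complex_of_real c * (v \<bullet>c u)) \<cdot>\<^sub>v u" if v: "v \<in> carrier_vec n" for v
  proof -
    have "S *\<^sub>v (S *\<^sub>v v) = (S * S) *\<^sub>v v" using S v by simp
    also have "\<dots> = (complex_of_real c * (v \<bullet>c u)) \<cdot>\<^sub>v u" using SS sproj_mv[OF u v] by simp
    finally show ?thesis .
  qed
  have kill: "S *\<^sub>v v = 0\<^sub>v n" if v: "v \<in> carrier_vec n" and vu: "v \<bullet>c u = 0" for v
  proof -
    have Sv: "S *\<^sub>v v \<in> carrier_vec n" using S v by simp
    have "(S *\<^sub>v v) \<bullet>c (S *\<^sub>v v) = v \<bullet>c (S *\<^sub>v (S *\<^sub>v v))" by (rule herm_adj[OF S h v Sv])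
    also have "\<dots> = 0" using SSv[OF v] vu v u by (simp add: sprod_smult[of _ n])
    finally show ?thesis using Sv by simp
  qed
  define k where "k = (S *\<^sub>v u) \<bullet>c u"
  have Suc: "S *\<^sub>v u \<in> carrier_vec n" using S u by simp
  have Su: "S *\<^sub>v u = k \<cdot>\<^sub>v u"
  proof (cases "c = 0")
    case True
    have "(S *\<^sub>v u) \<bullet>c (S *\<^sub>v u) = u \<bullet>c (S *\<^sub>v (S *\<^sub>v u))" by (rule herm_adj[OF S h u Suc])
    also have "\<dots> = 0" using SSv[OF u] True u by (simp add: sprod_smult[of _ n])
    finally have 0: "S *\<^sub>v u = 0\<^sub>v n" using Suc by simp
    then have "k = 0" unfolding k_def using u by simp
    then show ?thesis using 0 u by auto
  next
    case False
    have "S *\<^sub>v (S *\<^sub>v (S *\<^sub>v u)) = (complex_of_real c * k) \<cdot>\<^sub>v u"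
      using SSv[OF Suc] k_def by simp
    moreover have "S *\<^sub>v (S *\<^sub>v (S *\<^sub>v u)) = complex_of_real c \<cdot>\<^sub>v (S *\<^sub>v u)"
      using SSv[OF u] uu S u by (simp add: mult_mat_vec[of _ n n])
    ultimately have eq: "complex_of_real c \<cdot>\<^sub>v (S *\<^sub>v u) = (complex_of_real c * k) \<cdot>\<^sub>v u" by simp
    show ?thesis
    proof (rule eq_vecI)
      fix i assume "i < dim_vec (k \<cdot>\<^sub>v u)"
      then have i: "i < n" using u by simp
      have "complex_of_real c * (S *\<^sub>v u) $ i = complex_of_real c * (k * u $ i)"
        using arg_cong[OF eq, of "\<lambda>x. x $ i"] i S u by (simp add: mult.assoc)
      then show "(S *\<^sub>v u) $ i = (k \<cdot>\<^sub>v u) $ i" using False i u by simp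
    qed (use S u in simp)
  qed
  have "S *\<^sub>v (S *\<^sub>v u) = (k * k) \<cdot>\<^sub>v u"
    using Su S u by (simp add: mult_mat_vec[of _ n n] smult_smult_assoc)
  then have "(k * k) \<cdot>\<^sub>v u = complex_of_real c \<cdot>\<^sub>v u" using SSv[OF u] uu by simp
  then have "((k * k) \<cdot>\<^sub>v u) \<bullet>c u = (complex_of_real c \<cdot>\<^sub>v u) \<bullet>c u" by simp
  then have kk: "k * k = complex_of_real c" using u uu by (simp add: smult_sprod[of _ n])
  have "Im k = 0" "Re k \<ge> 0" using pq[OF u] unfolding k_def by auto
  then have kre: "k = complex_of_real (Re k)" by (simp add: complex_eq_iff)
  have "(Re k) * (Re k) = c" using kk kre by (metis of_real_eq_iff of_real_mult)
  then have "Re k = sqrt c" using \<open>Re k \<ge> 0\<close> by (metis real_sqrt_abs2 abs_of_nonneg)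
  then have ksq: "k = complex_of_real (sqrt c)" using kre by simp
  show ?thesis
  proof (rule mat_eq_by_vec[OF S sproj_carrier[OF u]])
    fix v :: "complex vec" assume v: "v \<in> carrier_vec n"
    define a where "a = v \<bullet>c u"
    define w where "w = v - a \<cdot>\<^sub>v u"
    have w: "w \<in> carrier_vec n" using v u by (simp add: w_def)
    have "w \<bullet>c u = 0" unfolding w_def a_def using minus_sprod[OF u v] uu by simp
    then have Sw: "S *\<^sub>v w = 0\<^sub>v n" using kill[OF w] by simp
    show "S *\<^sub>v v = sproj (sqrt c) u *\<^sub>v v"
    proof (rule eq_vecI)
      fix i assume "i < dim_vec (sproj (sqrt c) u *\<^sub>v v)"
      then have i: "i < n" using u by (simp add: sproj_def)
      have "(S *\<^sub>v w) $ i = (\<Sum>j<n. S$$(i,j) * (v$j - a * u$j))"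
        using S v u i by (simp add: w_def scalar_prod_def lessThan_atLeast0)
      also have "\<dots> = (S *\<^sub>v v) $ i - a * (S *\<^sub>v u) $ i"
        using S v u i by (simp add: scalar_prod_def lessThan_atLeast0 sum_subtractf sum_distrib_left algebra_simps)
      finally have "(S *\<^sub>v v) $ i = a * (S *\<^sub>v u) $ i" using Sw i by simp
      also have "\<dots> = a * k * u $ i" using Su i u by simp
      also have "\<dots> = (sproj (sqrt c) u *\<^sub>v v) $ i"
        using sproj_mv[OF u v, of "sqrt c"] i u ksq a_def by (simp add: mult_ac)
      finally show "(S *\<^sub>v v) $ i = (sproj (sqrt c) u *\<^sub>v v) $ i" .
    qed (use S u v in \<open>simp add: sproj_def\<close>)
  qed
qed

lemma mat_sqrt_sproj:
  assumes u: "u \<in> carrier_vec n" and uu: "u \<bullet>c u = 1" and c: "c \<ge> 0"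
  shows "mat_sqrt (sproj c u) = sproj (sqrt c) u"
  unfolding mat_sqrt_def
proof (rule the_equality)
  have d: "dim_row (sproj c u) = n" using u by (simp add: sproj_def)
  show "sproj (sqrt c) u \<in> carrier_mat (dim_row (sproj c u)) (dim_row (sproj c u)) \<and> psd_mat (sproj (sqrt c) u) \<and> sproj (sqrt c) u * sproj (sqrt c) u = sproj c u"
    using u uu c d by (simp add: sproj_carrier sproj_psd[OF u] sproj_mult[OF u uu])
  fix S assume "S \<in> carrier_mat (dim_row (sproj c u)) (dim_row (sproj c u)) \<and> psd_mat S \<and> S * S = sproj c u"
  then show "S = sproj (sqrt c) u" using sqrt_unique[OF u uu _ _ _ c] d by auto
qed


definition uvec :: "real vec \<Rightarrow> complex vec" where
  "uvec x = vec (dim_vec x) (\<lambda>i. complex_of_real (x$i / eucl_norm x))"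

definition ipn :: "real vec \<Rightarrow> real vec \<Rightarrow> real" where
  "ipn x y = (\<Sum>i<dim_vec x. x$i * y$i) / (eucl_norm x * eucl_norm y)"

lemma uvec_carrier: "dim_vec x = n \<Longrightarrow> uvec x \<in> carrier_vec n"
  by (simp add: uvec_def)

lemma amp_enc_sproj: "amp_enc x = sproj 1 (uvec x)"
proof (rule eq_matI)
  fix i j assume "i < dim_row (sproj 1 (uvec x))" "j < dim_col (sproj 1 (uvec x))"
  then have i: "i < dim_vec x" and j: "j < dim_vec x" by (auto simp: sproj_def uvec_def)
  have e: "complex_of_real (x $ i) * cnj (complex_of_real (x $ j)) / complex_of_real ((eucl_norm x)^2)
      = complex_of_real (x $ i / eucl_norm x) * cnj (complex_of_real (x $ j / eucl_norm x))"
  proof -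
    have r: "x$i * x$j / (eucl_norm x)^2 = x$i / eucl_norm x * (x$j / eucl_norm x)" unfolding power2_eq_square by simp
    show ?thesis by (simp only: complex_cnj_complex_of_real of_real_mult[symmetric] of_real_divide[symmetric] r)
  qed
  show "amp_enc x $$ (i, j) = sproj 1 (uvec x) $$ (i, j)"
    using i j e unfolding amp_enc_def sproj_def uvec_def by simp
qed (auto simp: amp_enc_def sproj_def uvec_def)

lemma norm_sq: "(eucl_norm x)^2 = (\<Sum>i<dim_vec x. (x$i)^2)"
  unfolding eucl_norm_def by (simp add: sum_nonneg)

lemma norm_nonneg: "eucl_norm x \<ge> 0"
  unfolding eucl_norm_def by (simp add: sum_nonneg)

lemma uvec_sprod: assumes "dim_vec y = dim_vec x"
  shows "uvec x \<bullet>c uvec y = complex_of_real ((\<Sum>i<dim_vec x. x$i * y$i) / (eucl_norm x * eucl_norm y))"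
proof -
  have "uvec x \<bullet>c uvec y = (\<Sum>i<dim_vec x. complex_of_real (x$i / eucl_norm x * (y$i / eucl_norm y)))"
    using assms by (simp add: sprod_sum[of _ "dim_vec x"] uvec_carrier uvec_def)
  also have "\<dots> = complex_of_real (\<Sum>i<dim_vec x. x$i / eucl_norm x * (y$i / eucl_norm y))" by simp
  also have "(\<Sum>i<dim_vec x. x$i / eucl_norm x * (y$i / eucl_norm y)) = (\<Sum>i<dim_vec x. x$i * y$i) / (eucl_norm x * eucl_norm y)"
    by (simp add: sum_divide_distrib)
  finally show ?thesis .
qed

lemma uvec_unit: assumes "eucl_norm x > 0" shows "uvec x \<bullet>c uvec x = 1"
proof -
  have "uvec x \<bullet>c uvec x = complex_of_real ((\<Sum>i<dim_vec x. x$i * x$i) / (eucl_norm x * eucl_norm x))"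
    by (rule uvec_sprod, simp)
  also have "(\<Sum>i<dim_vec x. x$i * x$i) = (\<Sum>i<dim_vec x. (x$i)^2)"
    by (rule sum.cong[OF refl]) (simp add: power2_eq_square)
  also have "\<dots> = (eucl_norm x)^2" by (rule norm_sq[symmetric])
  also have "\<dots> = eucl_norm x * eucl_norm x" by (rule power2_eq_square)
  finally show ?thesis using assms by simp
qed

lemma ipn_le1: "\<bar>ipn x y\<bar> \<le> 1" if "dim_vec y = dim_vec x"
proof -
  have "\<bar>\<Sum>i<dim_vec x. x$i * y$i\<bar> \<le> (\<Sum>i<dim_vec x. \<bar>x$i * y$i\<bar>)"
    by (rule sum_abs)
  also have "\<dots> = (\<Sum>i<dim_vec x. \<bar>x$i\<bar> * \<bar>y$i\<bar>)"
    by (rule sum.cong[OF refl]) (rule abs_mult)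
  also have "\<dots> \<le> L2_set (\<lambda>i. x$i) {..<dim_vec x} * L2_set (\<lambda>i. y$i) {..<dim_vec x}"
    by (rule L2_set_mult_ineq)
  also have "L2_set (\<lambda>i. x$i) {..<dim_vec x} = eucl_norm x"
    by (simp only: L2_set_def eucl_norm_def)
  also have "L2_set (\<lambda>i. y$i) {..<dim_vec x} = eucl_norm y"
    using that by (simp only: L2_set_def eucl_norm_def)
  finally have h: "\<bar>\<Sum>i<dim_vec x. x$i * y$i\<bar> \<le> eucl_norm x * eucl_norm y" .
  show ?thesis
  proof (cases "eucl_norm x * eucl_norm y = 0")
    case True
    then have "ipn x y = 0" unfolding ipn_def by (simp only: div_by_0)
    then show ?thesis by simp
  next
    case False
    then have pos: "eucl_norm x * eucl_norm y > 0" using norm_nonneg[of x] norm_nonneg[of y]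
      by (simp add: less_le)
    have "\<bar>ipn x y\<bar> = \<bar>\<Sum>i<dim_vec x. x$i * y$i\<bar> / (eucl_norm x * eucl_norm y)"
      unfolding ipn_def abs_divide using pos by simp
    also have "\<dots> \<le> 1" using h pos by (simp add: pos_divide_le_eq)
    finally show ?thesis .
  qed
qed

lemma bures_formula:
  assumes d: "dim_vec y = dim_vec x" and x: "eucl_norm x > 0" and y: "eucl_norm y > 0"
  shows "bures_dist (amp_enc x) (amp_enc y) = sqrt (1 - \<bar>ipn x y\<bar>)"
proof -
  define n where "n = dim_vec x"
  have ux: "uvec x \<in> carrier_vec n" and uy: "uvec y \<in> carrier_vec n" using d by (auto simp: uvec_carrier n_def)
  have uux: "uvec x \<bullet>c uvec x = 1" using uvec_unit[OF x] .
  define c where "c = cmod (uvec y \<bullet>c uvec x)"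
  have c0: "c \<ge> 0" by (simp add: c_def)
  have cval: "c = \<bar>ipn x y\<bar>"
  proof -
    have "uvec y \<bullet>c uvec x = complex_of_real ((\<Sum>i<dim_vec y. y$i * x$i) / (eucl_norm y * eucl_norm x))"
      using d by (intro uvec_sprod) simp
    also have "(\<Sum>i<dim_vec y. y$i * x$i) / (eucl_norm y * eucl_norm x) = ipn x y"
      unfolding ipn_def using d by (simp add: mult.commute)
    finally show ?thesis unfolding c_def by simp
  qed
  have s1': "mat_sqrt (sproj 1 (uvec x)) = sproj 1 (uvec x)"
    using mat_sqrt_sproj[OF ux uux, of 1] by simp
  have s1: "mat_sqrt (amp_enc x) = sproj 1 (uvec x)"
    using s1' by (simp add: amp_enc_sproj)
  have "mat_sqrt (amp_enc x) * amp_enc y * mat_sqrt (amp_enc x) = sproj (c^2) (uvec x)"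
    unfolding amp_enc_sproj s1' c_def by (rule sproj_sandwich[OF ux uy])
  then have "mat_sqrt (mat_sqrt (amp_enc x) * amp_enc y * mat_sqrt (amp_enc x)) = sproj c (uvec x)"
    using mat_sqrt_sproj[OF ux uux, of "c^2"] c0 by simp
  then have "fidelity (amp_enc x) (amp_enc y) = c^2"
    unfolding fidelity_def by (simp add: mtrace_sproj uux)
  then show ?thesis unfolding bures_dist_def using c0 cval by simp
qed

lemma bures_bounds:
  assumes d: "dim_vec y = dim_vec x" and x: "eucl_norm x > 0" and y: "eucl_norm y > 0"
  shows "0 \<le> bures_dist (amp_enc x) (amp_enc y) \<and> bures_dist (amp_enc x) (amp_enc y) \<le> 1"
  using bures_formula[OF assms] ipn_le1[OF d] by simp


lemma fin_pairs: "finite X \<Longrightarrow> finite {g a a' | a a'. a \<in> X \<and> a' \<in> X}"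
  using finite_image_set2[of "\<lambda>a. a \<in> X" "\<lambda>a. a \<in> X" g] by simp

lemma Max_ins0:
  fixes S :: "real set"
  assumes "finite S" "0 \<le> M" "\<forall>x\<in>S. x \<le> M" "M = 0 \<or> M \<in> S"
  shows "Max (insert 0 S) = M"
  using assms by (intro Max_eqI) auto

lemma Max_ins0_ge: "finite (S::real set) \<Longrightarrow> x \<in> S \<Longrightarrow> x \<le> Max (insert 0 S)"
  by (simp add: Max_ge)

lemma Max_ins0_nonneg: "finite (S::real set) \<Longrightarrow> 0 \<le> Max (insert 0 S)"
  by (simp add: Max_ge)

lemma diam_ge:
  assumes "finite X" "a \<in> X" "a' \<in> X"
  shows "dA a a' \<le> diam_fin X dA"
  unfolding diam_fin_def by (rule Max_ins0_ge) (use assms fin_pairs[of X dA] in auto)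

lemma diam_img_ge:
  assumes "finite X" "a \<in> X" "a' \<in> X"
  shows "dB (f a) (f a') \<le> diam_fin (f ` X) dB"
  by (rule diam_ge) (use assms in auto)

lemma diam_nonneg: "finite X \<Longrightarrow> 0 \<le> diam_fin X dA"
  unfolding diam_fin_def by (rule Max_ins0_nonneg) (rule fin_pairs)

lemma dist_bounds:
  assumes fin: "finite X" and pA: "\<forall>a\<in>X. \<forall>a'\<in>X. 0 \<le> dA a a'"
    and pB: "\<forall>a\<in>X. \<forall>a'\<in>X. 0 \<le> dB (f a) (f a')"
  shows "0 \<le> distortion X dA dB f \<and> distortion X dA dB f \<le> max (diam_fin X dA) (diam_fin (f ` X) dB)"
proof
  show "0 \<le> distortion X dA dB f" unfolding distortion_def by (rule Max_ins0_nonneg) (rule fin_pairs[OF fin])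
  have fX: "finite (f ` X)" using fin by simp
  show "distortion X dA dB f \<le> max (diam_fin X dA) (diam_fin (f ` X) dB)"
    unfolding distortion_def
  proof (subst Max_le_iff)
    show "finite (insert 0 {\<bar>dA a a' - dB (f a) (f a')\<bar> |a a'. a \<in> X \<and> a' \<in> X})"
      using fin_pairs[OF fin] by simp
    show "\<forall>x\<in>insert 0 {\<bar>dA a a' - dB (f a) (f a')\<bar> |a a'. a \<in> X \<and> a' \<in> X}. x \<le> max (diam_fin X dA) (diam_fin (f ` X) dB)"
    proof
      fix x assume "x \<in> insert 0 {\<bar>dA a a' - dB (f a) (f a')\<bar> |a a'. a \<in> X \<and> a' \<in> X}"
      then consider "x = 0" | a a' where "a \<in> X" "a' \<in> X" "x = \<bar>dA a a' - dB (f a) (f a')\<bar>" by blast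
      then show "x \<le> max (diam_fin X dA) (diam_fin (f ` X) dB)"
      proof cases
        case 1 then show ?thesis using diam_nonneg[OF fin] by (simp add: le_max_iff_disj)
      next
        case 2
        have "dA a a' \<le> diam_fin X dA" using diam_ge[OF fin 2(1,2)] .
        moreover have "dB (f a) (f a') \<le> diam_fin (f ` X) dB" using diam_img_ge[OF fin 2(1,2)] .
        moreover have "0 \<le> dA a a'" "0 \<le> dB (f a) (f a')" using pA pB 2 by auto
        ultimately show ?thesis using 2(3) by (simp add: abs_le_iff le_max_iff_disj) linarith
      qed
    qed
  qed simp
qed

lemma sf_le_dist:
  assumes fin: "finite X"
  shows "0 \<le> sf_distortion X dA dB f \<and> sf_distortion X dA dB f \<le> distortion X dA dB f"
proof -
  let ?g = "\<lambda>l. Max (insert 0 {\<bar>dA a a' - dB (f a) (f a') / l\<bar> | a a'. a \<in> X \<and> a' \<in> X})"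
  have g0: "0 \<le> ?g l" for l by (rule Max_ins0_nonneg) (rule fin_pairs[OF fin])
  have bdd: "bdd_below (?g ` {0<..})" by (rule bdd_belowI[of _ 0]) (use g0 in auto)
  have "0 \<le> (INF l\<in>{0<..}. ?g l)" by (rule cINF_greatest) (use g0 in auto)
  moreover have "(INF l\<in>{0<..}. ?g l) \<le> ?g 1" by (rule cINF_lower[OF bdd]) simp
  ultimately show ?thesis unfolding sf_distortion_def distortion_def by simp
qed


definition ev :: "nat \<Rightarrow> real \<Rightarrow> nat \<Rightarrow> real vec" where
  "ev n a k = vec n (\<lambda>i. if i = k then a else 0)"

lemma ev_dim[simp]: "dim_vec (ev n a k) = n" by (simp add: ev_def)
lemma ev_nth[simp]: "i < n \<Longrightarrow> ev n a k $ i = (if i = k then a else 0)" by (simp add: ev_def)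

lemma sum01:
  fixes n :: nat
  assumes "2 \<le> n" "\<And>i. 2 \<le> i \<Longrightarrow> i < n \<Longrightarrow> f i = 0"
  shows "(\<Sum>i<n. f i) = f 0 + f 1"
proof -
  have "(\<Sum>i<n. f i) = (\<Sum>i\<in>{0,1}. f i)"
    by (rule sum.mono_neutral_right) (use assms in auto)
  then show ?thesis by simp
qed

lemma ev_norm: assumes "2 \<le> n" "k < 2" shows "eucl_norm (ev n a k) = \<bar>a\<bar>"
proof -
  have "(\<Sum>i<n. (ev n a k $ i)^2) = (ev n a k $ 0)^2 + (ev n a k $ 1)^2"
    by (rule sum01) (use assms in auto)
  also have "\<dots> = a^2" using assms by (cases k) auto
  finally show ?thesis unfolding eucl_norm_def by simp
qed

lemma ev_dist: assumes "2 \<le> n" "k < 2" "l < 2"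
  shows "eucl_dist (ev n a k) (ev n b l) = (if k = l then \<bar>a - b\<bar> else sqrt (a^2 + b^2))"
proof -
  have "(\<Sum>i<n. (ev n a k $ i - ev n b l $ i)^2) = (ev n a k $ 0 - ev n b l $ 0)^2 + (ev n a k $ 1 - ev n b l $ 1)^2"
    by (rule sum01) (use assms in auto)
  also have "\<dots> = (if k = l then (a - b)^2 else a^2 + b^2)"
    using assms by (cases k; cases l) (auto simp: power2_commute)
  finally show ?thesis unfolding eucl_dist_def by simp
qed

lemma ev_inner: assumes "2 \<le> n" "k < 2" "l < 2"
  shows "(\<Sum>i<dim_vec (ev n a k). ev n a k $ i * ev n b l $ i) = (if k = l then a * b else 0)"
proof -
  have "(\<Sum>i<n. ev n a k $ i * ev n b l $ i) = ev n a k $ 0 * ev n b l $ 0 + ev n a k $ 1 * ev n b l $ 1"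
    by (rule sum01) (use assms in auto)
  also have "\<dots> = (if k = l then a * b else 0)"
    using assms by (cases k; cases l) auto
  finally show ?thesis by simp
qed

lemma ev_bures: assumes n: "2 \<le> n" and kl: "k < 2" "l < 2" and a: "0 < a" and b: "0 < b"
  shows "bures_dist (amp_enc (ev n a k)) (amp_enc (ev n b l)) = (if k = l then 0 else 1)"
proof -
  have "bures_dist (amp_enc (ev n a k)) (amp_enc (ev n b l)) = sqrt (1 - \<bar>ipn (ev n a k) (ev n b l)\<bar>)"
    by (rule bures_formula) (use assms ev_norm[OF n] in auto)
  also have "ipn (ev n a k) (ev n b l) = (if k = l then 1 else 0)"
    unfolding ipn_def ev_inner[OF n kl] ev_norm[OF n kl(1)] ev_norm[OF n kl(2)] using a b by simp
  finally show ?thesis by simp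
qed

lemma ev_punct: assumes "2 ^ d = n" "k < n" "a \<noteq> 0" shows "ev n a k \<in> punctured d"
proof -
  have "ev n a k \<noteq> 0\<^sub>v n"
  proof
    assume "ev n a k = 0\<^sub>v n"
    then have "ev n a k $ k = 0\<^sub>v n $ k" by simp
    then show False using assms by simp
  qed
  then show ?thesis using assms unfolding punctured_def by auto
qed

lemma punct_norm: assumes "x \<in> punctured d" shows "eucl_norm x > 0"
proof -
  have d: "dim_vec x = 2^d" and nz: "x \<noteq> 0\<^sub>v (2^d)" using assms unfolding punctured_def by auto
  obtain i where i: "i < 2^d" "x $ i \<noteq> 0"
    using nz d by (metis eq_vecI index_zero_vec(1) index_zero_vec(2))
  have "0 < (x $ i)^2" using i by simp
  also have "\<dots> \<le> (\<Sum>j<dim_vec x. (x $ j)^2)"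
    by (rule member_le_sum) (use i d in auto)
  finally show ?thesis unfolding eucl_norm_def by simp
qed


lemma X1_facts:
  assumes n: "2 \<le> n" and a: "1 < a"
  shows "\<forall>p\<in>{ev n 1 0, ev n a 0}. \<forall>q\<in>{ev n 1 0, ev n a 0}. bures_dist (amp_enc p) (amp_enc q) = 0"
    and "\<forall>p\<in>{ev n 1 0, ev n a 0}. \<forall>q\<in>{ev n 1 0, ev n a 0}. 0 \<le> eucl_dist p q \<and> eucl_dist p q \<le> a - 1"
    and "eucl_dist (ev n 1 0) (ev n a 0) = a - 1"
  using a ev_bures[OF n, of 0 0] ev_dist[OF n, of 0 0] by auto

lemma X1_Max:
  assumes n: "2 \<le> n" and a: "1 < a" and phi: "\<phi> 0 = 0"
  shows "Max (insert 0 {\<bar>eucl_dist p q - \<phi> (bures_dist (amp_enc p) (amp_enc q))\<bar> | p q.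
            p \<in> {ev n 1 0, ev n a 0} \<and> q \<in> {ev n 1 0, ev n a 0}}) = a - 1"
proof (rule Max_ins0)
  note F = X1_facts[OF n a]
  show "finite {\<bar>eucl_dist p q - \<phi> (bures_dist (amp_enc p) (amp_enc q))\<bar> | p q.
            p \<in> {ev n 1 0, ev n a 0} \<and> q \<in> {ev n 1 0, ev n a 0}}" by (rule fin_pairs) simp
  show "0 \<le> a - 1" using a by simp
  show "\<forall>x\<in>{\<bar>eucl_dist p q - \<phi> (bures_dist (amp_enc p) (amp_enc q))\<bar> | p q.
            p \<in> {ev n 1 0, ev n a 0} \<and> q \<in> {ev n 1 0, ev n a 0}}. x \<le> a - 1"
  proof (clarify)
    fix p q assume pq: "p \<in> {ev n 1 0, ev n a 0}" "q \<in> {ev n 1 0, ev n a 0}"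
    then have "bures_dist (amp_enc p) (amp_enc q) = 0" "0 \<le> eucl_dist p q" "eucl_dist p q \<le> a - 1"
      using F(1,2) by blast+
    then show "\<bar>eucl_dist p q - \<phi> (bures_dist (amp_enc p) (amp_enc q))\<bar> \<le> a - 1" using phi by simp
  qed
  have "\<bar>eucl_dist (ev n 1 0) (ev n a 0) - \<phi> (bures_dist (amp_enc (ev n 1 0)) (amp_enc (ev n a 0)))\<bar>
     \<in> {\<bar>eucl_dist p q - \<phi> (bures_dist (amp_enc p) (amp_enc q))\<bar> | p q.
            p \<in> {ev n 1 0, ev n a 0} \<and> q \<in> {ev n 1 0, ev n a 0}}" by blast
  moreover have "\<bar>eucl_dist (ev n 1 0) (ev n a 0) - \<phi> (bures_dist (amp_enc (ev n 1 0)) (amp_enc (ev n a 0)))\<bar> = a - 1"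
    using F phi a by simp
  ultimately show "a - 1 = 0 \<or> a - 1 \<in> {\<bar>eucl_dist p q - \<phi> (bures_dist (amp_enc p) (amp_enc q))\<bar> | p q.
            p \<in> {ev n 1 0, ev n a 0} \<and> q \<in> {ev n 1 0, ev n a 0}}" by simp
qed

lemma X1_all:
  assumes n: "2 \<le> n" and a: "1 < a"
  shows "distortion {ev n 1 0, ev n a 0} eucl_dist bures_dist amp_enc = a - 1"
    and "sf_distortion {ev n 1 0, ev n a 0} eucl_dist bures_dist amp_enc = a - 1"
    and "diam_fin {ev n 1 0, ev n a 0} eucl_dist = a - 1"
proof -
  show "distortion {ev n 1 0, ev n a 0} eucl_dist bures_dist amp_enc = a - 1"
    using X1_Max[OF n a, of "\<lambda>t. t"] unfolding distortion_def by simp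
  have "sf_distortion {ev n 1 0, ev n a 0} eucl_dist bures_dist amp_enc = (INF l\<in>{0::real<..}. a - 1)"
    unfolding sf_distortion_def
  proof (rule INF_cong[OF refl])
    fix l :: real
    show "Max (insert 0 {\<bar>eucl_dist aa a' - bures_dist (amp_enc aa) (amp_enc a') / l\<bar> |aa a'.
              aa \<in> {ev n 1 0, ev n a 0} \<and> a' \<in> {ev n 1 0, ev n a 0}}) = a - 1"
      using X1_Max[OF n a, of "\<lambda>t. t / l"] by simp
  qed
  then show "sf_distortion {ev n 1 0, ev n a 0} eucl_dist bures_dist amp_enc = a - 1" by simp
  show "diam_fin {ev n 1 0, ev n a 0} eucl_dist = a - 1"
    using X1_Max[OF n a, of "\<lambda>t. 0"] X1_facts(2)[OF n a] unfolding diam_fin_def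
    by (smt (verit, ccfv_SIG) Collect_cong)
qed


lemma X0_all:
  assumes n: "2 \<le> n"
  shows "distortion {ev n 1 0} eucl_dist bures_dist amp_enc = 0"
    and "sf_distortion {ev n 1 0} eucl_dist bures_dist amp_enc = 0"
proof -
  have e: "eucl_dist (ev n 1 0) (ev n 1 0) = 0" using ev_dist[OF n, of 0 0 1 1] by simp
  have b: "bures_dist (amp_enc (ev n 1 0)) (amp_enc (ev n 1 0)) = 0" using ev_bures[OF n, of 0 0 1 1] by simp
  have M: "Max (insert 0 {\<bar>eucl_dist p q - \<phi> (bures_dist (amp_enc p) (amp_enc q))\<bar> | p q.
            p \<in> {ev n 1 0} \<and> q \<in> {ev n 1 0}}) = 0" if phi: "\<phi> 0 = 0" for \<phi> :: "real \<Rightarrow> real"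
    by (rule Max_ins0) (use e b phi fin_pairs[of "{ev n 1 0}"] in auto)
  show "distortion {ev n 1 0} eucl_dist bures_dist amp_enc = 0"
    using M[of "\<lambda>t. t"] unfolding distortion_def by simp
  have "sf_distortion {ev n 1 0} eucl_dist bures_dist amp_enc = (INF l\<in>{0::real<..}. 0)"
    unfolding sf_distortion_def
  proof (rule INF_cong[OF refl])
    fix l :: real
    show "Max (insert 0 {\<bar>eucl_dist aa a' - bures_dist (amp_enc aa) (amp_enc a') / l\<bar> |aa a'.
              aa \<in> {ev n 1 0} \<and> a' \<in> {ev n 1 0}}) = 0"
      using M[of "\<lambda>t. t / l"] by simp
  qed
  then show "sf_distortion {ev n 1 0} eucl_dist bures_dist amp_enc = 0" by simp
qed

lemma X2_all:
  assumes n: "2 \<le> n" and e0: "0 < e" and e1: "e < 1"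
  defines "p \<equiv> ev n (3 * e / 5) 0" and "q \<equiv> ev n (4 * e / 5) 1"
  shows "distortion {p, q} eucl_dist bures_dist amp_enc = 1 - e"
    and "diam_fin (amp_enc ` {p, q}) bures_dist = 1"
    and "card {p, q} = 2"
proof -
  have bpp: "bures_dist (amp_enc p) (amp_enc p) = 0" unfolding p_def using ev_bures[OF n, of 0 0] e0 by simp
  have bqq: "bures_dist (amp_enc q) (amp_enc q) = 0" unfolding q_def using ev_bures[OF n, of 1 1] e0 by simp
  have bpq: "bures_dist (amp_enc p) (amp_enc q) = 1" unfolding p_def q_def using ev_bures[OF n, of 0 1] e0 by simp
  have bqp: "bures_dist (amp_enc q) (amp_enc p) = 1" unfolding p_def q_def using ev_bures[OF n, of 1 0] e0 by simp
  have epp: "eucl_dist p p = 0" unfolding p_def using ev_dist[OF n, of 0 0] by simp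
  have eqq: "eucl_dist q q = 0" unfolding q_def using ev_dist[OF n, of 1 1] by simp
  have sq: "sqrt ((3 * e / 5)^2 + (4 * e / 5)^2) = e"
  proof -
    have "(3 * e / 5)^2 + (4 * e / 5)^2 = e^2" by (simp add: power2_eq_square field_simps)
    then show ?thesis using e0 by simp
  qed
  have epq: "eucl_dist p q = e" unfolding p_def q_def using ev_dist[OF n, of 0 1] sq by simp
  have eqp: "eucl_dist q p = e" unfolding p_def q_def using ev_dist[OF n, of 1 0] sq by (simp add: add.commute)
  show "distortion {p, q} eucl_dist bures_dist amp_enc = 1 - e"
    unfolding distortion_def
  proof (rule Max_ins0)
    show "finite {\<bar>eucl_dist a a' - bures_dist (amp_enc a) (amp_enc a')\<bar> |a a'. a \<in> {p, q} \<and> a' \<in> {p, q}}"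
      by (rule fin_pairs) simp
    show "0 \<le> 1 - e" using e1 by simp
    show "\<forall>x\<in>{\<bar>eucl_dist a a' - bures_dist (amp_enc a) (amp_enc a')\<bar> |a a'. a \<in> {p, q} \<and> a' \<in> {p, q}}. x \<le> 1 - e"
      using bpp bqq bpq bqp epp eqq epq eqp e0 e1 by auto
    have "\<bar>eucl_dist p q - bures_dist (amp_enc p) (amp_enc q)\<bar> \<in> {\<bar>eucl_dist a a' - bures_dist (amp_enc a) (amp_enc a')\<bar> |a a'. a \<in> {p, q} \<and> a' \<in> {p, q}}"
      by blast
    then show "1 - e = 0 \<or> 1 - e \<in> {\<bar>eucl_dist a a' - bures_dist (amp_enc a) (amp_enc a')\<bar> |a a'. a \<in> {p, q} \<and> a' \<in> {p, q}}"
      using epq bpq e1 by simp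
  qed
  show "diam_fin (amp_enc ` {p, q}) bures_dist = 1"
    unfolding diam_fin_def
  proof (rule Max_ins0)
    show "finite {bures_dist z z' |z z'. z \<in> amp_enc ` {p, q} \<and> z' \<in> amp_enc ` {p, q}}"
      by (rule fin_pairs) simp
    show "\<forall>x\<in>{bures_dist z z' |z z'. z \<in> amp_enc ` {p, q} \<and> z' \<in> amp_enc ` {p, q}}. x \<le> 1"
      using bpp bqq bpq bqp by auto
    have "bures_dist (amp_enc p) (amp_enc q) \<in> {bures_dist z z' |z z'. z \<in> amp_enc ` {p, q} \<and> z' \<in> amp_enc ` {p, q}}"
      by blast
    then show "(1::real) = 0 \<or> 1 \<in> {bures_dist z z' |z z'. z \<in> amp_enc ` {p, q} \<and> z' \<in> amp_enc ` {p, q}}"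
      using bpq by simp
  qed simp
  have "p $ 0 \<noteq> q $ 0" unfolding p_def q_def using n e0 by simp
  then have "p \<noteq> q" by auto
  then show "card {p, q} = 2" by simp
qed


lemma eucl_dist_nonneg: "0 \<le> eucl_dist x y"
  unfolding eucl_dist_def by (simp add: sum_nonneg)

lemma pc_ev2: assumes "2 \<le> n" "2 ^ d = n" "a \<noteq> 0" "b \<noteq> 0" "k < 2" "l < 2"
  shows "point_cloud d {ev n a k, ev n b l}"
  unfolding point_cloud_def using ev_punct[of d n k a] ev_punct[of d n l b] assms by auto

theorem mainTheorem1:
  fixes d :: nat
  assumes "d \<ge> 1"
  shows
   "(\<forall>X. point_cloud d X \<longrightarrow>
        0 \<le> distortion X eucl_dist bures_dist amp_enc \<and>
        distortion X eucl_dist bures_dist amp_enc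
          \<le> max (diam_fin X eucl_dist) (diam_fin (amp_enc ` X) bures_dist))
    \<and> (\<exists>X. point_cloud d X \<and> distortion X eucl_dist bures_dist amp_enc = 0)
    \<and> (\<exists>X. point_cloud d X \<and> distortion X eucl_dist bures_dist amp_enc = diam_fin X eucl_dist)
    \<and> (\<exists>N::nat. \<forall>\<epsilon>::real. 0 < \<epsilon> \<and> \<epsilon> < 1 \<longrightarrow>
         (\<exists>X. point_cloud d X \<and> card X = N \<and>
              distortion X eucl_dist bures_dist amp_enc
                = diam_fin (amp_enc ` X) bures_dist - \<epsilon>))
    \<and> (\<forall>X. point_cloud d X \<longrightarrow>
        0 \<le> sf_distortion X eucl_dist bures_dist amp_enc \<and>
        sf_distortion X eucl_dist bures_dist amp_enc
          \<le> max (diam_fin X eucl_dist) (diam_fin (amp_enc ` X) bures_dist))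
    \<and> (\<exists>X. point_cloud d X \<and> sf_distortion X eucl_dist bures_dist amp_enc = 0)
    \<and> (\<exists>X. point_cloud d X \<and> sf_distortion X eucl_dist bures_dist amp_enc = diam_fin X eucl_dist)
    \<and> (\<exists>Xs :: nat \<Rightarrow> real vec set.
         (\<forall>n. point_cloud d (Xs n)) \<and> (\<exists>c. \<forall>n. card (Xs n) = c) \<and>
         filterlim (\<lambda>n. sf_distortion (Xs n) eucl_dist bures_dist amp_enc) at_top sequentially)"
proof -
  define n where "n = (2::nat) ^ d"
  have "(2::nat) ^ 1 \<le> 2 ^ d" by (rule power_increasing) (use assms in auto)
  then have n2: "2 \<le> n" unfolding n_def by simp
  have nd: "2 ^ d = n" unfolding n_def by simp
  have P1: "\<forall>X. point_cloud d X \<longrightarrow>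
        0 \<le> distortion X eucl_dist bures_dist amp_enc \<and>
        distortion X eucl_dist bures_dist amp_enc
          \<le> max (diam_fin X eucl_dist) (diam_fin (amp_enc ` X) bures_dist)"
  proof (intro allI impI)
    fix X assume X: "point_cloud d X"
    then have fin: "finite X" and sub: "X \<subseteq> punctured d" unfolding point_cloud_def by auto
    have "\<forall>a\<in>X. \<forall>a'\<in>X. 0 \<le> bures_dist (amp_enc a) (amp_enc a')"
    proof (intro ballI)
      fix a a' assume "a \<in> X" "a' \<in> X"
      then have "a \<in> punctured d" "a' \<in> punctured d" using sub by auto
      then show "0 \<le> bures_dist (amp_enc a) (amp_enc a')"
        using bures_bounds[of a' a] punct_norm[of a d] punct_norm[of a' d] unfolding punctured_def by auto
    qed
    then show "0 \<le> distortion X eucl_dist bures_dist amp_enc \<and>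
        distortion X eucl_dist bures_dist amp_enc
          \<le> max (diam_fin X eucl_dist) (diam_fin (amp_enc ` X) bures_dist)"
      using dist_bounds[OF fin] eucl_dist_nonneg by blast
  qed
  have P5: "\<forall>X. point_cloud d X \<longrightarrow>
        0 \<le> sf_distortion X eucl_dist bures_dist amp_enc \<and>
        sf_distortion X eucl_dist bures_dist amp_enc
          \<le> max (diam_fin X eucl_dist) (diam_fin (amp_enc ` X) bures_dist)"
  proof (intro allI impI)
    fix X assume X: "point_cloud d X"
    then have fin: "finite X" unfolding point_cloud_def by auto
    show "0 \<le> sf_distortion X eucl_dist bures_dist amp_enc \<and>
        sf_distortion X eucl_dist bures_dist amp_enc
          \<le> max (diam_fin X eucl_dist) (diam_fin (amp_enc ` X) bures_dist)"
      using sf_le_dist[OF fin, of eucl_dist bures_dist amp_enc] P1 X by force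
  qed
  have pc0: "point_cloud d {ev n 1 0}" using pc_ev2[OF n2 nd, of 1 1 0 0] by simp
  have pc1: "point_cloud d {ev n 1 0, ev n 2 0}" using pc_ev2[OF n2 nd, of 1 2 0 0] by simp
  have P2: "\<exists>X. point_cloud d X \<and> distortion X eucl_dist bures_dist amp_enc = 0"
    using pc0 X0_all[OF n2] by blast
  have P6: "\<exists>X. point_cloud d X \<and> sf_distortion X eucl_dist bures_dist amp_enc = 0"
    using pc0 X0_all[OF n2] by blast
  have P3: "\<exists>X. point_cloud d X \<and> distortion X eucl_dist bures_dist amp_enc = diam_fin X eucl_dist"
    using pc1 X1_all[OF n2, of 2] by auto
  have P7: "\<exists>X. point_cloud d X \<and> sf_distortion X eucl_dist bures_dist amp_enc = diam_fin X eucl_dist"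
    using pc1 X1_all[OF n2, of 2] by auto
  have P4: "\<exists>N::nat. \<forall>\<epsilon>::real. 0 < \<epsilon> \<and> \<epsilon> < 1 \<longrightarrow>
         (\<exists>X. point_cloud d X \<and> card X = N \<and>
              distortion X eucl_dist bures_dist amp_enc
                = diam_fin (amp_enc ` X) bures_dist - \<epsilon>)"
  proof (intro exI[of _ 2] allI impI)
    fix e :: real assume e: "0 < e \<and> e < 1"
    let ?X = "{ev n (3 * e / 5) 0, ev n (4 * e / 5) 1}"
    have "point_cloud d ?X" using pc_ev2[OF n2 nd, of "3 * e / 5" "4 * e / 5" 0 1] e by simp
    then show "\<exists>X. point_cloud d X \<and> card X = 2 \<and>
              distortion X eucl_dist bures_dist amp_enc = diam_fin (amp_enc ` X) bures_dist - e"
      using X2_all[OF n2, of e] e by (intro exI[of _ ?X]) simp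
  qed
  have P8: "\<exists>Xs :: nat \<Rightarrow> real vec set.
         (\<forall>n. point_cloud d (Xs n)) \<and> (\<exists>c. \<forall>n. card (Xs n) = c) \<and>
         filterlim (\<lambda>n. sf_distortion (Xs n) eucl_dist bures_dist amp_enc) at_top sequentially"
  proof (intro exI[of _ "\<lambda>k. {ev n 1 0, ev n (real k + 2) 0}"] conjI allI exI[of _ 2])
    fix k :: nat
    show "point_cloud d {ev n 1 0, ev n (real k + 2) 0}" using pc_ev2[OF n2 nd, of 1 "real k + 2" 0 0] by simp
    have "ev n 1 0 $ 0 \<noteq> ev n (real k + 2) 0 $ 0" using n2 by simp
    then have "ev n 1 0 \<noteq> ev n (real k + 2) 0" by auto
    then show "card {ev n 1 0, ev n (real k + 2) 0} = 2" by simp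
  next
    have "sf_distortion {ev n 1 0, ev n (real k + 2) 0} eucl_dist bures_dist amp_enc = 1 + real k" for k
      using X1_all(2)[OF n2, of "real k + 2"] by simp
    moreover have "filterlim (\<lambda>k::nat. 1 + real k) at_top sequentially"
      by (rule filterlim_tendsto_add_at_top[OF tendsto_const filterlim_real_sequentially])
    ultimately show "filterlim (\<lambda>k. sf_distortion {ev n 1 0, ev n (real k + 2) 0} eucl_dist bures_dist amp_enc) at_top sequentially"
      by simp
  qed
  show ?thesis using P1 P2 P3 P4 P5 P6 P7 P8 by blast
qed

end
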